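(* There is an absolute constant $c$ such that for all positive integers $N,\ell,k$ with $k\le N$, $\chi(\mathcal U_{N,\ell,k})\le 2^{c k\log_2(\ell+1)}\cdot\log^{(\lfloor (k-1)/\ell\rfloor-1)}N$, where $\log^{(i)}N$ is interpreted as $N$ for $i\le 0$.
   Context: $[N]=\{1,\dots,N\}$, $S_N$ is the set of permutations of $[N]$. For $\pi,\sigma\in S_N$, $\delta(\pi,\sigma)=\max_{i\in[N]}|\pi^{-1}(i)-\sigma^{-1}(i)|$. For $1\le k\le N$, $S_{N,k}$ is the set of injective maps $[k]\to[N]$; a permutation $\pi'\in S_N$ extends $\pi\in S_{N,k}$ if $\pi'(i)=\pi(i)$ for all $i\in[k]$. For $\pi,\sigma\in S_{N,k}$, $\delta(\pi,\sigma)=\min\{\delta(\pi',\sigma'):\pi',\sigma'\in S_N$ extending $\pi,\sigma$ respectively$\}$. The $k$-restricted uncertainty graph $\mathcal U_{N,\ell,k}$ has vertex set $S_{N,k}$, with $\pi\sim\sigma$ iff $\pi(1)\ne\sigma(1)$ and $\delta(\pi,\sigma)\le\ell$. $\log^{(i)}$ denotes the $i$-fold iterated base-2 logarithm. $\chi$ denotes chromatic number. *)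

theory Defs
  imports Complex_Main "HOL-Library.FuncSet" "HOL-Combinatorics.Permutations"
begin

definition perm_dist :: "nat \<Rightarrow> (nat \<Rightarrow> nat) \<Rightarrow> (nat \<Rightarrow> nat) \<Rightarrow> nat" where
  "perm_dist N p q = Max ((\<lambda>i. nat \<bar>int (inv p i) - int (inv q i)\<bar>) ` {1..N})"

definition partial_perms :: "nat \<Rightarrow> nat \<Rightarrow> (nat \<Rightarrow> nat) set" where
  "partial_perms N k = {f \<in> {1..k} \<rightarrow>\<^sub>E {1..N}. inj_on f {1..k}}"

definition extends :: "nat \<Rightarrow> (nat \<Rightarrow> nat) \<Rightarrow> (nat \<Rightarrow> nat) \<Rightarrow> bool" where
  "extends k p f \<longleftrightarrow> (\<forall>i\<in>{1..k}. p i = f i)"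

definition partial_dist :: "nat \<Rightarrow> nat \<Rightarrow> (nat \<Rightarrow> nat) \<Rightarrow> (nat \<Rightarrow> nat) \<Rightarrow> nat" where
  "partial_dist N k f g = Min {perm_dist N p q | p q.
      p permutes {1..N} \<and> q permutes {1..N} \<and> extends k p f \<and> extends k q g}"

definition unc_adj :: "nat \<Rightarrow> nat \<Rightarrow> nat \<Rightarrow> (nat \<Rightarrow> nat) \<Rightarrow> (nat \<Rightarrow> nat) \<Rightarrow> bool" where
  "unc_adj N l k f g \<longleftrightarrow> f 1 \<noteq> g 1 \<and> partial_dist N k f g \<le> l"

definition chromatic_number :: "'a set \<Rightarrow> ('a \<Rightarrow> 'a \<Rightarrow> bool) \<Rightarrow> nat" where
  "chromatic_number V E = (LEAST n. \<exists>col :: 'a \<Rightarrow> nat.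
      (\<forall>v\<in>V. col v < n) \<and> (\<forall>u\<in>V. \<forall>v\<in>V. E u v \<longrightarrow> col u \<noteq> col v))"

text \<open>iterated base-2 logarithm, floored at 1 after each step; equals x for i \<le> 0\<close>
fun ilog_nat :: "nat \<Rightarrow> real \<Rightarrow> real" where
  "ilog_nat 0 x = x"
| "ilog_nat (Suc n) x = max 1 (log 2 (ilog_nat n x))"

definition ilog :: "int \<Rightarrow> real \<Rightarrow> real" where
  "ilog i x = ilog_nat (nat i) x"

end

theory Submission
  imports Defs
begin


lemma ext_exists:
  assumes f: "f \<in> partial_perms N k"
  shows "\<exists>p. p permutes {1..N} \<and> extends k p f"
proof -
  let ?A = "{1..k}" and ?U = "{1..N::nat}"
  have inj: "inj_on f ?A" and img: "f ` ?A \<subseteq> ?U" using f by (auto simp: partial_perms_def PiE_def Pi_def)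
  have "card ?A \<le> card ?U" using card_inj_on_le[OF inj img] by simp
  hence kN: "k \<le> N" by simp
  hence AU: "?A \<subseteq> ?U" by auto
  have cB: "card (f ` ?A) = k" using card_image[OF inj] by simp
  have "card (?U - ?A) = card (?U - f ` ?A)"
    using card_Diff_subset[OF _ AU] card_Diff_subset[OF _ img] cB by simp
  hence "\<exists>h. bij_betw h (?U - ?A) (?U - f ` ?A)"
    by (intro finite_same_card_bij) auto
  then obtain h where h: "bij_betw h (?U - ?A) (?U - f ` ?A)" by blast
  define p where "p x = (if x \<in> ?A then f x else if x \<in> ?U then h x else x)" for x
  have "bij_betw p ?A (f ` ?A) = bij_betw f ?A (f ` ?A)" by (rule bij_betw_cong) (simp add: p_def)
  hence b1: "bij_betw p ?A (f ` ?A)" using inj_on_imp_bij_betw[OF inj] by simp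
  have "bij_betw p (?U - ?A) (?U - f ` ?A) = bij_betw h (?U - ?A) (?U - f ` ?A)"
    by (rule bij_betw_cong) (simp add: p_def)
  hence b2: "bij_betw p (?U - ?A) (?U - f ` ?A)" using h by simp
  have "bij_betw p (?A \<union> (?U - ?A)) (f ` ?A \<union> (?U - f ` ?A))"
    by (rule bij_betw_combine[OF b1 b2]) auto
  moreover have "?A \<union> (?U - ?A) = ?U" "f ` ?A \<union> (?U - f ` ?A) = ?U" using AU img by auto
  ultimately have "bij_betw p ?U ?U" by simp
  hence "p permutes ?U" by (rule bij_imp_permutes) (use AU in \<open>auto simp: p_def\<close>)
  moreover have "extends k p f" by (simp add: extends_def p_def)
  ultimately show ?thesis by blast
qed

lemma dist_set_finite:
  "finite {perm_dist N p q | p q. p permutes {1..N} \<and> q permutes {1..N} \<and> extends k p f \<and> extends k q g}"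
proof -
  have "{perm_dist N p q | p q. p permutes {1..N} \<and> q permutes {1..N} \<and> extends k p f \<and> extends k q g}
    \<subseteq> (\<lambda>(p,q). perm_dist N p q) ` ({p. p permutes {1..N}} \<times> {q. q permutes {1..N}})" by auto
  moreover have "finite ({p. p permutes {1..N::nat}} \<times> {q. q permutes {1..N}})"
    using finite_permutations by blast
  ultimately show ?thesis by (meson finite_surj)
qed

lemma adj_witness:
  assumes f: "f \<in> partial_perms N k" and g: "g \<in> partial_perms N k" and a: "unc_adj N l k f g"
  shows "\<exists>p q. p permutes {1..N} \<and> q permutes {1..N} \<and> extends k p f \<and> extends k q g \<and> perm_dist N p q \<le> l"
proof -
  let ?S = "{perm_dist N p q | p q. p permutes {1..N} \<and> q permutes {1..N} \<and> extends k p f \<and> extends k q g}"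
  obtain p q where "p permutes {1..N}" "extends k p f" "q permutes {1..N}" "extends k q g"
    using ext_exists[OF f] ext_exists[OF g] by blast
  hence ne: "?S \<noteq> {}" by blast
  have "Min ?S \<in> ?S" using Min_in[OF dist_set_finite ne] .
  moreover have "Min ?S \<le> l" using a by (simp add: unc_adj_def partial_dist_def)
  ultimately show ?thesis by force
qed

lemma perm_dist_le:
  assumes "p permutes {1..N}" "q permutes {1..N}" "v \<in> {1..N}"
  shows "nat \<bar>int (inv p v) - int (inv q v)\<bar> \<le> perm_dist N p q"
  unfolding perm_dist_def using assms(3) by (intro Max_ge) auto




definition Nb :: "nat \<Rightarrow> nat \<Rightarrow> nat \<Rightarrow> (nat\<Rightarrow>nat) \<Rightarrow> (nat\<Rightarrow>nat) set" where
  "Nb N l k' f = {h \<in> partial_perms N k'. \<forall>j\<in>{1..k'}. \<exists>i\<in>{1..k'+l}. j \<le> i + l \<and> i \<le> j + l \<and> h j = f i}"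

lemma restr_mem:
  assumes "f \<in> partial_perms N k" "k' \<le> k"
  shows "restrict f {1..k'} \<in> partial_perms N k'"
proof -
  have f1: "\<forall>i\<in>{1..k}. f i \<in> {1..N}" and f2: "inj_on f {1..k}"
    using assms(1) unfolding partial_perms_def by (auto simp: PiE_iff)
  have sub: "{1..k'} \<subseteq> {1..k}" using assms(2) by auto
  have "restrict f {1..k'} \<in> {1..k'} \<rightarrow>\<^sub>E {1..N}"
    unfolding restrict_PiE_iff using f1 sub by blast
  moreover have "inj_on (restrict f {1..k'}) {1..k'}"
    unfolding inj_on_restrict_eq using inj_on_subset[OF f2 sub] .
  ultimately show ?thesis unfolding partial_perms_def by blast
qed

lemma restr_adj:
  assumes f: "f \<in> partial_perms N k" and g: "g \<in> partial_perms N k" and a: "unc_adj N l k f g"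
    and k': "1 \<le> k'" "k' \<le> k"
  shows "unc_adj N l k' (restrict f {1..k'}) (restrict g {1..k'})"
proof -
  obtain p q where pq: "p permutes {1..N}" "q permutes {1..N}" "extends k p f" "extends k q g" "perm_dist N p q \<le> l"
    using adj_witness[OF f g a] by blast
  have "extends k' p (restrict f {1..k'})" "extends k' q (restrict g {1..k'})"
    using pq(3,4) k' by (auto simp: extends_def)
  hence "perm_dist N p q \<in> {perm_dist N p q | p q. p permutes {1..N} \<and> q permutes {1..N} \<and>
     extends k' p (restrict f {1..k'}) \<and> extends k' q (restrict g {1..k'})}" using pq by blast
  hence "partial_dist N k' (restrict f {1..k'}) (restrict g {1..k'}) \<le> perm_dist N p q"
    unfolding partial_dist_def by (rule Min_le[OF dist_set_finite])
  moreover have "f 1 \<noteq> g 1" using a by (simp add: unc_adj_def)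
  ultimately show ?thesis using pq(5) k' by (simp add: unc_adj_def)
qed

lemma restr_nb:
  assumes f: "f \<in> partial_perms N (k'+l)" and g: "g \<in> partial_perms N (k'+l)" and a: "unc_adj N l (k'+l) f g"
  shows "restrict g {1..k'} \<in> Nb N l k' f"
proof -
  obtain p q where pq: "p permutes {1..N}" "q permutes {1..N}" "extends (k'+l) p f" "extends (k'+l) q g" "perm_dist N p q \<le> l"
    using adj_witness[OF f g a] by blast
  have "\<exists>i\<in>{1..k'+l}. j \<le> i + l \<and> i \<le> j + l \<and> g j = f i" if j: "j \<in> {1..k'}" for j
  proof -
    define v where "v = g j"
    have v: "v \<in> {1..N}" using g j by (auto simp: partial_perms_def PiE_def Pi_def v_def)
    have "q j = v" using pq(4) j by (auto simp: extends_def v_def)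
    hence iq: "inv q v = j" using permutes_inv_eq[OF pq(2)] by simp
    define i where "i = inv p v"
    have pi: "p i = v" using permutes_inverses[OF pq(1)] i_def by simp
    have iN: "i \<in> {1..N}" using permutes_in_image[OF permutes_inv[OF pq(1)]] v i_def by simp
    have "nat \<bar>int i - int j\<bar> \<le> l" using perm_dist_le[OF pq(1,2) v] pq(5) iq i_def by simp
    hence ij: "j \<le> i + l" "i \<le> j + l" by auto
    hence "i \<in> {1..k'+l}" using iN j by auto
    moreover have "f i = v" using pq(3) \<open>i \<in> {1..k'+l}\<close> pi by (auto simp: extends_def)
    ultimately show ?thesis using ij by (intro bexI[of _ i]) (auto simp: v_def)
  qed
  moreover have "restrict g {1..k'} \<in> partial_perms N k'" using restr_mem[OF g] by simp
  ultimately show ?thesis unfolding Nb_def by auto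
qed

lemma Nb_card:
  "finite (Nb N l k' f) \<and> card (Nb N l k' f) \<le> (2*l+1)^k'"
proof -
  let ?P = "PiE {1..k'} (\<lambda>j. {j-l..j+l})"
  have sub: "Nb N l k' f \<subseteq> (\<lambda>\<sigma>. restrict (f \<circ> \<sigma>) {1..k'}) ` ?P"
  proof
    fix h assume h: "h \<in> Nb N l k' f"
    hence hx: "h \<in> {1..k'} \<rightarrow>\<^sub>E {1..N}" by (simp add: Nb_def partial_perms_def)
    have "\<forall>j\<in>{1..k'}. \<exists>i. j \<le> i + l \<and> i \<le> j + l \<and> h j = f i" using h by (auto simp: Nb_def)
    from bchoice[OF this] obtain \<sigma> where s0: "\<forall>j\<in>{1..k'}. j \<le> \<sigma> j + l \<and> \<sigma> j \<le> j + l \<and> h j = f (\<sigma> j)" by blast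
    hence s: "\<And>j. j\<in>{1..k'} \<Longrightarrow> j \<le> \<sigma> j + l \<and> \<sigma> j \<le> j + l \<and> h j = f (\<sigma> j)" by blast
    have "restrict \<sigma> {1..k'} \<in> ?P" using s by fastforce
    moreover have "h = restrict (f \<circ> restrict \<sigma> {1..k'}) {1..k'}"
    proof
      fix x show "h x = restrict (f \<circ> restrict \<sigma> {1..k'}) {1..k'} x"
        using s[of x] hx by (cases "x \<in> {1..k'}") (auto simp: PiE_def extensional_def)
    qed
    ultimately show "h \<in> (\<lambda>\<sigma>. restrict (f \<circ> \<sigma>) {1..k'}) ` ?P" by blast
  qed
  have fin: "finite ?P" by (rule finite_PiE) auto
  have "card ?P = (\<Prod>j\<in>{1..k'}. card {j-l..j+l})" by (rule card_PiE) simp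
  also have "\<dots> \<le> (\<Prod>j\<in>{1..k'}. 2*l+1)" proof (rule prod_mono)
    fix j assume "j \<in> {1..k'}"
    have "card {j-l..j+l} = Suc (j+l) - (j-l)" by simp
    also have "\<dots> \<le> 2*l+1" by linarith
    finally show "0 \<le> card {j-l..j+l} \<and> card {j-l..j+l} \<le> 2*l+1" by simp
  qed
  also have "\<dots> = (2*l+1)^k'" by simp
  finally have "card ?P \<le> (2*l+1)^k'" .
  moreover have "card (Nb N l k' f) \<le> card ?P"
    using card_mono[OF finite_imageI[OF fin] sub] card_image_le[OF fin, of "\<lambda>\<sigma>. restrict (f \<circ> \<sigma>) {1..k'}"] by linarith
  moreover have "finite (Nb N l k' f)" using finite_subset[OF sub finite_imageI[OF fin]] .
  ultimately show ?thesis by (meson order_trans)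
qed




lemma bad_card:
  fixes T s Q :: nat and c :: "nat \<Rightarrow> nat"
  defines "W \<equiv> PiE {..<T} (\<lambda>_. {..<Q})"
  shows "card {w \<in> W. s \<le> card {t. t<T \<and> w t = c t}} \<le> (T choose s) * Q^(T-s)"
proof -
  define I where "I = {S. S \<subseteq> {..<T} \<and> card S = s}"
  define P where "P S = PiE {..<T} (\<lambda>t. if t\<in>S then {c t} else {..<Q})" for S
  have sub: "{w \<in> W. s \<le> card {t. t<T \<and> w t = c t}} \<subseteq> (\<Union>S\<in>I. P S)"
  proof
    fix w assume w: "w \<in> {w \<in> W. s \<le> card {t. t<T \<and> w t = c t}}"
    then obtain S where S: "S \<subseteq> {t. t<T \<and> w t = c t}" "card S = s"
      using obtain_subset_with_card_n by blast
    have "S \<in> I" using S by (auto simp: I_def)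
    moreover have "w \<in> P S" using w S unfolding P_def W_def by (auto simp: PiE_iff)
    ultimately show "w \<in> (\<Union>S\<in>I. P S)" by blast
  qed
  have finI: "finite I" unfolding I_def by (rule finite_subset[of _ "Pow {..<T}"]) auto
  have cardP: "card (P S) = Q^(T-s)" if "S \<in> I" for S
  proof -
    have S: "S \<subseteq> {..<T}" "card S = s" using that by (auto simp: I_def)
    have "card (P S) = (\<Prod>t\<in>{..<T}. card (if t\<in>S then {c t} else {..<Q}))"
      unfolding P_def by (rule card_PiE) simp
    also have "\<dots> = (\<Prod>t\<in>{..<T}. if t\<in>S then 1 else Q)" by (rule prod.cong) auto
    also have "\<dots> = (\<Prod>t\<in>{..<T} \<inter> {t. t\<in>S}. 1) * (\<Prod>t\<in>{..<T} \<inter> - {t. t\<in>S}. Q)"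
      by (rule prod.If_cases) simp
    also have "\<dots> = Q ^ card ({..<T} \<inter> - {t. t\<in>S})" by simp
    also have "{..<T} \<inter> - {t. t\<in>S} = {..<T} - S" by auto
    also have "card ({..<T} - S) = T - s" using S by (simp add: card_Diff_subset finite_subset)
    finally show ?thesis .
  qed
  have fin2: "finite (\<Union>S\<in>I. P S)" using finI unfolding P_def by (auto intro!: finite_PiE)
  have "card {w \<in> W. s \<le> card {t. t<T \<and> w t = c t}} \<le> card (\<Union>S\<in>I. P S)"
    by (rule card_mono[OF fin2 sub])
  also have "\<dots> \<le> (\<Sum>S\<in>I. card (P S))" by (rule card_UN_le[OF finI])
  also have "\<dots> = (\<Sum>S\<in>I. Q^(T-s))" by (rule sum.cong) (auto simp: cardP)
  also have "\<dots> = card I * Q^(T-s)" by simp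
  also have "card I = T choose s" unfolding I_def using n_subsets[of "{..<T}" s] by simp
  finally show ?thesis .
qed

lemma code_exists:
  fixes T s M :: nat
  assumes T: "T \<ge> 1" and M: "M \<le> 2^s"
  shows "\<exists>E::nat\<Rightarrow>nat\<Rightarrow>nat. (\<forall>a<M. \<forall>t<T. E a t < 2*T) \<and>
     (\<forall>a<M. \<forall>b<M. a \<noteq> b \<longrightarrow> card {t. t<T \<and> E a t = E b t} < s)"
  using M
proof (induction M)
  case 0
  then show ?case by auto
next
  case (Suc M)
  then obtain E where E1: "\<forall>a<M. \<forall>t<T. E a t < 2*T"
     and E2: "\<forall>a<M. \<forall>b<M. a \<noteq> b \<longrightarrow> card {t. t<T \<and> E a t = E b t} < s" by auto
  have Ms: "M < 2^s" using Suc.prems by simp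
  define Q where "Q = 2*T"
  define W where "W = PiE {..<T} (\<lambda>_. {..<Q})"
  define bad where "bad c = {w \<in> W. s \<le> card {t. t<T \<and> w t = c t}}" for c :: "nat \<Rightarrow> nat"
  have cb: "card (bad c) \<le> (T choose s) * Q^(T-s)" for c
    unfolding bad_def W_def by (rule bad_card)
  have finW: "finite W" unfolding W_def by (rule finite_PiE) auto
  have cW: "card W = Q^T" unfolding W_def by (simp add: card_PiE)
  have "card (\<Union>a<M. bad (E a)) \<le> (\<Sum>a<M. card (bad (E a)))" by (rule card_UN_le) simp
  also have "\<dots> \<le> (\<Sum>a<M. (T choose s) * Q^(T-s))" by (rule sum_mono) (rule cb)
  also have "\<dots> = M * ((T choose s) * Q^(T-s))" by simp
  also have "\<dots> < Q^T"
  proof (cases "s \<le> T")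
    case True
    have "M * ((T choose s) * Q^(T-s)) \<le> M * (T^s * Q^(T-s))"
      using binomial_le_pow[OF True] by simp
    also have "\<dots> < 2^s * (T^s * Q^(T-s))"
      using Ms T Q_def by (intro mult_strict_right_mono) auto
    also have "\<dots> = Q^s * Q^(T-s)" by (simp add: Q_def power_mult_distrib)
    also have "\<dots> = Q^T" using True by (simp add: power_add[symmetric])
    finally show ?thesis .
  next
    case False
    thus ?thesis using T Q_def by (simp add: binomial_eq_0)
  qed
  finally have "card (\<Union>a<M. bad (E a)) < card W" using cW by simp
  have "\<not> W \<subseteq> (\<Union>a<M. bad (E a))"
  proof
    assume "W \<subseteq> (\<Union>a<M. bad (E a))"
    hence "card W \<le> card (\<Union>a<M. bad (E a))"
      by (rule card_mono[rotated]) (auto simp: bad_def intro: finite_subset[OF _ finW])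
    thus False using \<open>card (\<Union>a<M. bad (E a)) < card W\<close> by simp
  qed
  then obtain w where w: "w \<in> W" "w \<notin> (\<Union>a<M. bad (E a))" by blast
  define E' where "E' = E(M := w)"
  have wT: "\<forall>t<T. w t < 2*T" using w(1) by (auto simp: W_def Q_def PiE_iff)
  have wb: "card {t. t<T \<and> w t = E a t} < s" if "a < M" for a
    using w that unfolding bad_def by (auto simp: not_le)
  have "\<forall>a<Suc M. \<forall>t<T. E' a t < 2*T" using E1 wT by (auto simp: E'_def less_Suc_eq)
  moreover have "\<forall>a<Suc M. \<forall>b<Suc M. a \<noteq> b \<longrightarrow> card {t. t<T \<and> E' a t = E' b t} < s"
  proof (intro allI impI)
    fix a b assume ab: "a < Suc M" "b < Suc M" "a \<noteq> b"
    show "card {t. t<T \<and> E' a t = E' b t} < s"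
    proof (cases "a = M")
      case True
      thus ?thesis using ab wb[of b] by (simp add: E'_def)
    next
      case False
      note aM = this
      show ?thesis
      proof (cases "b = M")
        case True
        have "{t. t<T \<and> E a t = w t} = {t. t<T \<and> w t = E a t}" by auto
        thus ?thesis using True aM ab wb[of a] by (simp add: E'_def)
      next
        case False
        thus ?thesis using aM ab E2 by (simp add: E'_def)
      qed
    qed
  qed
  ultimately show ?case by blast
qed




definition proper :: "nat \<Rightarrow> nat \<Rightarrow> nat \<Rightarrow> ((nat\<Rightarrow>nat) \<Rightarrow> nat) \<Rightarrow> bool" where
  "proper N l k col \<longleftrightarrow> (\<forall>u\<in>partial_perms N k. \<forall>v\<in>partial_perms N k. unc_adj N l k u v \<longrightarrow> col u \<noteq> col v)"

lemma step:
  assumes k': "1 \<le> k'" and D: "(2*l+1)^k' \<le> D" and s: "1 \<le> s" "M \<le> 2^s"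
    and col: "\<forall>v\<in>partial_perms N k'. col v < M" "proper N l k' col"
  shows "\<exists>col'. (\<forall>v\<in>partial_perms N (k'+l). col' v < 2*(D*s)*(D*s)) \<and> proper N l (k'+l) col'"
proof -
  define T where "T = D*s"
  define Q where "Q = 2*T"
  have D1: "D \<ge> 1" using D by (metis le_trans one_le_power le_add2 add.commute)
  have T1: "T \<ge> 1" using D1 s by (simp add: T_def)
  obtain E where E1: "\<forall>a<M. \<forall>t<T. E a t < 2*T"
     and E2: "\<forall>a<M. \<forall>b<M. a \<noteq> b \<longrightarrow> card {t. t<T \<and> E a t = E b t} < s"
    using code_exists[OF T1 s(2)] by blast
  define r where "r f = restrict f {1..k'}" for f :: "nat \<Rightarrow> nat"
  define good where "good f t \<longleftrightarrow> t < T \<and> (\<forall>h\<in>Nb N l k' f. col h \<noteq> col (r f) \<longrightarrow> E (col h) t \<noteq> E (col (r f)) t)" for f t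
  define tf where "tf f = (LEAST t. good f t)" for f
  define col' where "col' f = tf f * Q + E (col (r f)) (tf f)" for f
  have rV: "r f \<in> partial_perms N k'" if "f \<in> partial_perms N (k'+l)" for f
    unfolding r_def by (rule restr_mem[OF that]) simp
  have ex: "\<exists>t. good f t" if f: "f \<in> partial_perms N (k'+l)" for f
  proof -
    define a where "a = col (r f)"
    have aM: "a < M" using col(1) rV[OF f] by (simp add: a_def)
    define H where "H = {h \<in> Nb N l k' f. col h \<noteq> a}"
    define B where "B = (\<Union>h\<in>H. {t. t<T \<and> E (col h) t = E a t})"
    have NbC: "finite (Nb N l k' f)" "card (Nb N l k' f) \<le> (2*l+1)^k'" using Nb_card by auto
    have finH: "finite H" using NbC(1) by (simp add: H_def)
    have cH: "card H \<le> D" using card_mono[OF NbC(1), of H] NbC(2) D by (auto simp: H_def)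
    have each: "card {t. t<T \<and> E (col h) t = E a t} \<le> s - 1" if "h \<in> H" for h
    proof -
      have "h \<in> partial_perms N k'" using that by (simp add: H_def Nb_def)
      hence "col h < M" using col(1) by simp
      moreover have "col h \<noteq> a" using that by (simp add: H_def)
      ultimately have "card {t. t<T \<and> E (col h) t = E a t} < s" using E2 aM by blast
      thus ?thesis by simp
    qed
    have "card B \<le> (\<Sum>h\<in>H. card {t. t<T \<and> E (col h) t = E a t})"
      unfolding B_def by (rule card_UN_le[OF finH])
    also have "\<dots> \<le> (\<Sum>h\<in>H. s - 1)" by (rule sum_mono) (rule each)
    also have "\<dots> = card H * (s - 1)" by simp
    also have "\<dots> \<le> D * (s - 1)" using cH by simp
    also have "\<dots> < T" using D1 s(1) by (simp add: T_def algebra_simps diff_mult_distrib2)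
    finally have "card B < card {..<T}" by simp
    moreover have finB: "finite B" unfolding B_def using finH by auto
    ultimately have "\<not> {..<T} \<subseteq> B" using card_mono[OF finB, of "{..<T}"] by auto
    then obtain t where t: "t < T" "t \<notin> B" by blast
    have "good f t" using t unfolding good_def B_def H_def a_def by blast
    thus ?thesis by blast
  qed
  have bound: "col' f < 2*(D*s)*(D*s)" if f: "f \<in> partial_perms N (k'+l)" for f
  proof -
    have g: "good f (tf f)" unfolding tf_def using ex[OF f] by (rule LeastI_ex)
    hence tT: "tf f < T" by (simp add: good_def)
    have "col (r f) < M" using col(1) rV[OF f] by simp
    hence e: "E (col (r f)) (tf f) < Q" using E1 tT by (simp add: Q_def)
    have "col' f < tf f * Q + Q" using e by (simp add: col'_def)
    also have "\<dots> = (tf f + 1) * Q" by simp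
    also have "\<dots> \<le> T * Q" using tT by (intro mult_right_mono) auto
    finally show ?thesis by (simp add: Q_def T_def)
  qed
  have prp: "proper N l (k'+l) col'"
    unfolding proper_def
  proof (intro ballI impI notI)
    fix f g assume f: "f \<in> partial_perms N (k'+l)" and g: "g \<in> partial_perms N (k'+l)"
      and a: "unc_adj N l (k'+l) f g" and eq: "col' f = col' g"
    have gf: "good f (tf f)" unfolding tf_def using ex[OF f] by (rule LeastI_ex)
    have gg: "good g (tf g)" unfolding tf_def using ex[OF g] by (rule LeastI_ex)
    have ef: "E (col (r f)) (tf f) < Q" using col(1) rV[OF f] E1 gf by (simp add: Q_def good_def)
    have eg: "E (col (r g)) (tf g) < Q" using col(1) rV[OF g] E1 gg by (simp add: Q_def good_def)
    have "col' f div Q = tf f" "col' f mod Q = E (col (r f)) (tf f)" using ef by (simp_all add: col'_def)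
    moreover have "col' g div Q = tf g" "col' g mod Q = E (col (r g)) (tf g)" using eg by (simp_all add: col'_def)
    ultimately have tt: "tf f = tf g" and ee: "E (col (r f)) (tf f) = E (col (r g)) (tf f)" using eq by metis+
    have rg: "r g \<in> Nb N l k' f" unfolding r_def by (rule restr_nb[OF f g a])
    have "unc_adj N l k' (r f) (r g)" unfolding r_def by (rule restr_adj[OF f g a k']) simp
    hence "col (r f) \<noteq> col (r g)" using col(2) rV[OF f] rV[OF g] by (simp add: proper_def)
    hence "E (col (r g)) (tf f) \<noteq> E (col (r f)) (tf f)" using gf rg by (auto simp: good_def)
    thus False using ee by simp
  qed
  show ?thesis using bound prp by blast
qed




lemma ln2_ge: "1/2 \<le> ln (2::real)"
proof -
  have "exp (1/2::real) \<le> 2" using exp_bound_half[of "1/2::real"] by simp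
  thus ?thesis by (subst ln_ge_iff) auto
qed

lemma log_sq:
  fixes x :: real assumes x: "x \<ge> 1"
  shows "(max 1 (log 2 x))^2 \<le> 16 * x"
proof -
  define u where "u = sqrt x"
  have u1: "u \<ge> 1" using x by (simp add: u_def)
  have xu: "x = u^2" using x by (simp add: u_def)
  have lu: "ln u \<le> u - 1" using u1 by (intro ln_le_minus_one) simp
  have m: "(2*u-2) * (1/2) \<le> (2*u-2) * ln 2" by (rule mult_left_mono[OF ln2_ge]) (use u1 in simp)
  have l2: "ln 2 > (0::real)" by simp
  have h: "ln u \<le> (2*(u-1)) * ln 2" using lu m by (simp add: algebra_simps)
  have "ln u / ln 2 \<le> 2*(u-1)" using h pos_divide_le_eq[OF l2] by blast
  hence "log 2 u \<le> 2 * (u - 1)" by (simp add: log_def)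
  hence l1: "log 2 x \<le> 4 * u" using u1 xu by (simp add: log_nat_power)
  have l0: "0 \<le> log 2 x" using x by simp
  have "(log 2 x)^2 \<le> (4*u)^2" using l0 l1 by (intro power_mono) auto
  also have "\<dots> = 16 * x" using xu by (simp add: power_mult_distrib)
  finally have "(log 2 x)^2 \<le> 16 * x" .
  moreover have "1 \<le> 16 * x" using x by simp
  ultimately show ?thesis by (cases "log 2 x \<le> 1") (auto simp: max_def)
qed

lemma nat_ineq: "(4*d+28::nat)^2 \<le> 2^(2*d+23)"
proof (induction d)
  case 0 then show ?case by simp
next
  case (Suc d)
  have "(4*Suc d+28::nat)^2 \<le> (2*(4*d+28))^2" by (intro power_mono) auto
  also have "\<dots> = 4 * (4*d+28)^2" by (simp add: power2_eq_square algebra_simps)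
  also have "\<dots> \<le> 4 * 2^(2*d+23)" using Suc by simp
  also have "\<dots> = 2^(2*Suc d+23)" by (simp add: power_add)
  finally show ?case .
qed

lemma ilog_ge1: "x \<ge> 1 \<Longrightarrow> ilog_nat t x \<ge> 1"
  by (cases t) auto

lemma step_real:
  fixes R :: real
  assumes k': "1 \<le> k'" and D: "(2*l+1)^k' \<le> D" and R: "R \<ge> 1"
    and col: "\<forall>v\<in>partial_perms N k'. real (col v) < R" "proper N l k' col"
  shows "\<exists>col'. (\<forall>v\<in>partial_perms N (k'+l). real (col' v) < 2 * real D ^ 2 * (log 2 R + 2)^2)
          \<and> proper N l (k'+l) col'"
proof -
  define s where "s = nat \<lceil>log 2 R\<rceil> + 1"
  have lR: "0 \<le> log 2 R" using R by simp
  have s1: "1 \<le> s" by (simp add: s_def)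
  have ss: "log 2 R \<le> real s" "real s \<le> log 2 R + 2" using lR by (simp_all add: s_def) linarith+
  have "R = 2 powr (log 2 R)" using R by simp
  also have "\<dots> \<le> 2 powr (real s)" using ss by (intro powr_mono) auto
  also have "\<dots> = real (2^s)" by (simp add: powr_realpow)
  finally have R2: "R \<le> real (2^s)" .
  have c2: "\<forall>v\<in>partial_perms N k'. col v < 2^s"
  proof
    fix v assume "v \<in> partial_perms N k'"
    hence "real (col v) < R" using col(1) by blast
    hence "real (col v) < real (2^s)" using R2 by linarith
    thus "col v < 2^s" by linarith
  qed
  obtain col' where c': "\<forall>v\<in>partial_perms N (k'+l). col' v < 2*(D*s)*(D*s)" "proper N l (k'+l) col'"
    using step[OF k' D s1 order.refl c2 col(2)] by blast
  have "real (2*(D*s)*(D*s)) = 2 * real D^2 * (real s)^2" by (simp add: power2_eq_square)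
  also have "\<dots> \<le> 2 * real D^2 * (log 2 R + 2)^2"
    using ss by (intro mult_left_mono power_mono) auto
  finally have b: "real (2*(D*s)*(D*s)) \<le> 2 * real D^2 * (log 2 R + 2)^2" .
  show ?thesis
  proof (intro exI conjI ballI)
    fix v assume "v \<in> partial_perms N (k'+l)"
    hence "col' v < 2*(D*s)*(D*s)" using c'(1) by blast
    hence "real (col' v) < real (2*(D*s)*(D*s))" by (simp only: of_nat_less_iff)
    thus "real (col' v) < 2 * real D ^ 2 * (log 2 R + 2)^2" using b by linarith
  qed (rule c'(2))
qed




lemma chrom_le:
  assumes "\<forall>v\<in>V. col v < n" "\<forall>u\<in>V. \<forall>v\<in>V. E u v \<longrightarrow> col u \<noteq> col v"
  shows "chromatic_number V E \<le> n"
  unfolding chromatic_number_def by (rule Least_le) (use assms in blast)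

theorem lemma1p5:
  shows "\<exists>c::real. \<forall>N l k :: nat. 0 < N \<longrightarrow> 0 < l \<longrightarrow> 0 < k \<longrightarrow> k \<le> N \<longrightarrow>
    real (chromatic_number (partial_perms N k) (unc_adj N l k))
      \<le> 2 powr (c * real k * log 2 (real l + 1)) * ilog (int ((k - 1) div l) - 1) (real N)"
proof (intro exI allI impI)
  fix N l k :: nat
  assume N0: "0 < N" and l0: "0 < l" and k0: "0 < k" and kN: "k \<le> N"
  define c :: real where "c = 45"
  define m where "m = (k - 1) div l"
  define \<kappa>0 where "\<kappa>0 = k - m * l"
  have mm: "(k - 1) div l = m" by (simp add: m_def)
  have ml: "m * l \<le> k - 1" unfolding m_def by simp
  have k01: "1 \<le> \<kappa>0" using ml k0 by (simp add: \<kappa>0_def)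
  have kk: "\<kappa>0 + m * l = k" using ml k0 by (simp add: \<kappa>0_def)
  define lg where "lg = log 2 (real l + 1)"
  have lg1: "1 \<le> lg" using l0 by (simp add: lg_def)
  define L where "L = nat \<lceil>lg\<rceil>"
  have LL: "real L = of_int \<lceil>lg\<rceil>" unfolding L_def using lg1 by (intro of_nat_nat) simp
  have L1: "real L \<le> 2 * lg" using lg1 LL by linarith
  have L2: "lg \<le> real L" using LL by linarith
  have "real l + 1 = 2 powr lg" by (simp add: lg_def)
  also have "\<dots> \<le> 2 powr (real L)" by (intro powr_mono) (use L2 in auto)
  also have "\<dots> = real (2^L)" by (simp add: powr_realpow)
  finally have lL: "l + 1 \<le> 2^L" by linarith
  define \<delta> where "\<delta> = 2 * k * L"
  define D :: nat where "D = 2^\<delta>"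
  have Dle: "(2*l+1)^k' \<le> D" if "k' \<le> k" for k'
  proof -
    have "2*l+1 \<le> (l+1)^2" by (simp add: power2_eq_square)
    also have "\<dots> \<le> (2^L)^2" using lL by (intro power_mono) auto
    finally have a: "2*l+1 \<le> (2::nat)^(2*L)" by (simp add: power_mult[symmetric] mult.commute)
    have "(2*l+1)^k' \<le> (2*l+1)^k" using that by (intro power_increasing) auto
    also have "\<dots> \<le> ((2::nat)^(2*L))^k" using a by (intro power_mono) auto
    also have "\<dots> = D" by (simp add: D_def \<delta>_def power_mult[symmetric] mult.commute mult.left_commute)
    finally show ?thesis .
  qed
  define col0 where "col0 f = f 1 - 1" for f :: "nat \<Rightarrow> nat"
  have f1: "f 1 \<in> {1..N}" if "f \<in> partial_perms N k'" "1 \<le> k'" for f k'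
    using that by (auto simp: partial_perms_def PiE_iff)
  have c0: "\<forall>v\<in>partial_perms N k'. col0 v < N" if "1 \<le> k'" for k'
    using f1 that by (force simp: col0_def)
  have p0: "proper N l k' col0" if "1 \<le> k'" for k'
    unfolding proper_def
  proof (intro ballI impI)
    fix u v assume u: "u \<in> partial_perms N k'" and v: "v \<in> partial_perms N k'" and a: "unc_adj N l k' u v"
    have "u 1 \<noteq> v 1" using a by (simp add: unc_adj_def)
    thus "col0 u \<noteq> col0 v" using f1[OF u that] f1[OF v that] by (auto simp: col0_def)
  qed
  have pos: "1 \<le> 2 powr (c * real k * lg)" using lg1 by (intro ge_one_powr_ge_zero) (auto simp: c_def)
  show "real (chromatic_number (partial_perms N k) (unc_adj N l k))
      \<le> 2 powr (c * real k * log 2 (real l + 1)) * ilog (int ((k - 1) div l) - 1) (real N)"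
  proof (cases "m = 0")
    case True
    have "chromatic_number (partial_perms N k) (unc_adj N l k) \<le> N"
      by (rule chrom_le[OF c0]) (use p0[of k] k0 in \<open>auto simp: proper_def\<close>)
    hence "real (chromatic_number (partial_perms N k) (unc_adj N l k)) \<le> 1 * real N" by simp
    also have "\<dots> \<le> 2 powr (c * real k * lg) * real N" using pos by (intro mult_right_mono) auto
    finally show ?thesis using True unfolding mm by (simp add: ilog_def lg_def)
  next
    case False
    define X :: real where "X = 2^\<delta>"
    have X1: "1 \<le> X" by (simp add: X_def)
    have XD: "real D = X" by (simp add: D_def X_def)
    define B :: real where "B = 2^24 * X^4"
    have "1 \<le> X^4" using X1 by (rule one_le_power)
    hence B1: "1 \<le> B" by (simp add: B_def)
    have logB: "log 2 B = 4 * \<delta> + 24"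
    proof -
      have "B = 2^(4*\<delta>+24)" by (simp add: B_def X_def power_add power_mult[symmetric] mult.commute)
      thus ?thesis by simp
    qed
    define y where "y t = ilog_nat t (real N)" for t
    have y1: "1 \<le> y t" for t unfolding y_def by (rule ilog_ge1) (use N0 in simp)
    have ni: "(4*real \<delta>+28)^2 \<le> 2^23 * X^2"
    proof -
      have "real ((4*\<delta>+28)^2) \<le> real (2^(2*\<delta>+23))" using nat_ineq[of \<delta>] by (simp only: of_nat_le_iff)
      moreover have "real (2^(2*\<delta>+23)) = 2^23 * X^2" by (simp add: X_def power_add power_mult[symmetric] mult.commute)
      ultimately show ?thesis by simp
    qed
    have rounds: "1 \<le> t \<longrightarrow> t \<le> m \<longrightarrow> (\<exists>col. (\<forall>v\<in>partial_perms N (\<kappa>0 + t*l). real (col v) < B * (y t)^2)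
        \<and> proper N l (\<kappa>0 + t*l) col)" for t
    proof (induction t)
      case 0 then show ?case by simp
    next
      case (Suc t)
      show ?case
      proof (intro impI)
        assume t1: "Suc t \<le> m"
        show "\<exists>col. (\<forall>v\<in>partial_perms N (\<kappa>0 + Suc t*l). real (col v) < B * (y (Suc t))^2)
            \<and> proper N l (\<kappa>0 + Suc t*l) col"
        proof (cases "t = 0")
          case True
          have R1: "1 \<le> real N" using N0 by simp
          have c0r: "\<forall>v\<in>partial_perms N \<kappa>0. real (col0 v) < real N" using c0[OF k01] by simp
          have D0: "(2*l+1)^\<kappa>0 \<le> D" using Dle kk by (intro Dle) linarith
          obtain col' where cc: "\<forall>v\<in>partial_perms N (\<kappa>0+l). real (col' v) < 2 * real D ^ 2 * (log 2 (real N) + 2)^2"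
            "proper N l (\<kappa>0+l) col'"
            using step_real[OF k01 D0 R1 c0r p0[OF k01]] by blast
          have yy: "y (Suc 0) = max 1 (log 2 (real N))" by (simp add: y_def)
          have lN: "0 \<le> log 2 (real N)" using N0 by simp
          have "log 2 (real N) + 2 \<le> 3 * y (Suc 0)" using yy by linarith
          hence "(log 2 (real N) + 2)^2 \<le> (3 * y (Suc 0))^2" using lN by (intro power_mono) auto
          hence sq: "(log 2 (real N) + 2)^2 \<le> 9 * (y (Suc 0))^2" by (simp add: power_mult_distrib)
          have "2 * real D ^ 2 * (log 2 (real N) + 2)^2 \<le> 2 * X^2 * (9 * (y (Suc 0))^2)"
            unfolding XD by (rule mult_left_mono[OF sq]) simp
          also have "\<dots> \<le> B * (y (Suc 0))^2"
          proof -
            have X2: "1 \<le> X^2" using X1 by (rule one_le_power)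
            have "18 * X^2 \<le> 2^24 * X^2" using X2 by simp
            also have "\<dots> \<le> 2^24 * (X^2 * X^2)" using mult_left_mono[of 1 "X^2" "X^2"] X2 by simp
            also have "X^2 * X^2 = X^4" by (simp flip: power_add)
            finally have "18 * X^2 \<le> 2^24 * X^4" .
            hence "18 * X^2 * (y (Suc 0))^2 \<le> 2^24 * X^4 * (y (Suc 0))^2" by (rule mult_right_mono) simp
            thus ?thesis unfolding B_def by simp
          qed
          finally have "\<forall>v\<in>partial_perms N (\<kappa>0+l). real (col' v) < B * (y (Suc 0))^2"
            using cc(1) by (meson less_le_trans)
          thus ?thesis using cc(2) True by auto
        next
          case False
          hence t1': "1 \<le> t" "t \<le> m" using t1 by auto
          obtain col where cc: "\<forall>v\<in>partial_perms N (\<kappa>0 + t*l). real (col v) < B * (y t)^2"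
              "proper N l (\<kappa>0 + t*l) col" using Suc.IH t1' by blast
          define R where "R = B * (y t)^2"
          have "1 \<le> (y t)^2" using y1[of t] by (rule one_le_power)
          hence "1 * 1 \<le> B * (y t)^2" using B1 by (intro mult_mono) auto
          hence R1: "1 \<le> R" unfolding R_def by simp
          have Dt: "(2*l+1)^(\<kappa>0 + t*l) \<le> D"
          proof (rule Dle)
            have "t * l \<le> m * l" using t1' by simp
            thus "\<kappa>0 + t*l \<le> k" using kk by linarith
          qed
          have k1: "1 \<le> \<kappa>0 + t*l" using k01 by simp
          obtain col' where cc': "\<forall>v\<in>partial_perms N (\<kappa>0 + t*l + l). real (col' v) < 2 * real D ^ 2 * (log 2 R + 2)^2"
            "proper N l (\<kappa>0 + t*l + l) col'"
            using step_real[OF k1 Dt R1 cc(1)[folded R_def] cc(2)] by blast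
          define y' where "y' = y (Suc t)"
          have yy: "y' = max 1 (log 2 (y t))" by (simp add: y'_def y_def)
          have "log 2 R = log 2 B + log 2 ((y t)^2)" unfolding R_def
            using B1 y1[of t] by (simp add: log_mult)
          also have "\<dots> = 4 * \<delta> + 24 + 2 * log 2 (y t)" using y1[of t] logB by (simp add: log_nat_power)
          finally have lR: "log 2 R = 4 * \<delta> + 24 + 2 * log 2 (y t)" .
          have lR0: "0 \<le> log 2 R" using R1 by simp
          have "log 2 R + 2 \<le> (4 * real \<delta> + 28) * y'"
          proof -
            have "log 2 R + 2 \<le> 4 * real \<delta> + 26 + 2 * y'" using lR yy by linarith
            also have "\<dots> \<le> (4 * real \<delta> + 26) * y' + 2 * y'" using yy by (intro add_right_mono) (simp add: mult_le_cancel_left1)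
            finally show ?thesis by (simp add: algebra_simps)
          qed
          hence "(log 2 R + 2)^2 \<le> ((4 * real \<delta> + 28) * y')^2" using lR0 by (intro power_mono) auto
          hence sq: "(log 2 R + 2)^2 \<le> (4 * real \<delta> + 28)^2 * y'^2" by (simp add: power_mult_distrib)
          have "2 * real D ^ 2 * (log 2 R + 2)^2 \<le> 2 * X^2 * ((4 * real \<delta> + 28)^2 * y'^2)"
            unfolding XD by (rule mult_left_mono[OF sq]) simp
          also have "\<dots> \<le> 2 * X^2 * ((2^23 * X^2) * y'^2)" using ni by (intro mult_left_mono mult_right_mono) auto
          also have "\<dots> = B * y'^2" by (simp add: B_def power4_eq_xxxx power2_eq_square)
          finally have "\<forall>v\<in>partial_perms N (\<kappa>0 + t*l + l). real (col' v) < B * (y (Suc t))^2"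
            using cc'(1) unfolding y'_def by (meson less_le_trans)
          moreover have lev: "\<kappa>0 + t*l + l = \<kappa>0 + Suc t * l" by simp
          ultimately show ?thesis using cc'(2) unfolding lev by blast
        qed
      qed
    qed
    obtain col where cc: "\<forall>v\<in>partial_perms N k. real (col v) < B * (y m)^2" "proper N l k col"
      using rounds[of m] False kk by auto
    define n where "n = nat \<lceil>B * (y m)^2\<rceil>"
    have cn: "\<forall>v\<in>partial_perms N k. col v < n"
    proof
      fix v assume "v \<in> partial_perms N k"
      hence "real (col v) < B * (y m)^2" using cc(1) by blast
      thus "col v < n" unfolding n_def by linarith
    qed
    have "chromatic_number (partial_perms N k) (unc_adj N l k) \<le> n"
      by (rule chrom_le[OF cn]) (use cc(2) in \<open>simp add: proper_def\<close>)
    hence "real (chromatic_number (partial_perms N k) (unc_adj N l k)) \<le> real n" by simp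
    also have "\<dots> \<le> B * (y m)^2 + 1"
    proof -
      have "0 \<le> B * (y m)^2" using B1 by simp
      hence "real n = of_int \<lceil>B * (y m)^2\<rceil>" unfolding n_def by (intro of_nat_nat) simp
      thus ?thesis by linarith
    qed
    also have "\<dots> \<le> 2 * B * (y m)^2"
    proof -
      have "1 \<le> (y m)^2" using y1[of m] by (rule one_le_power)
      hence "1 * 1 \<le> B * (y m)^2" using B1 by (intro mult_mono) auto
      thus ?thesis by simp
    qed
    also have "\<dots> \<le> 2 * B * (16 * y (m-1))"
    proof -
      have "y m = max 1 (log 2 (y (m-1)))" using False by (cases m) (auto simp: y_def)
      hence "(y m)^2 \<le> 16 * y (m-1)" using log_sq[OF y1[of "m-1"]] by simp
      thus ?thesis using B1 by simp
    qed
    also have "\<dots> = 2^29 * X^4 * y (m-1)" by (simp add: B_def)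
    also have "\<dots> \<le> 2 powr (c * real k * lg) * y (m-1)"
    proof -
      have "X^4 = (2::real)^(\<delta>*4)" unfolding X_def by (rule power_mult[symmetric])
      also have "\<delta>*4 = 8*k*L" by (simp add: \<delta>_def)
      finally have "2^29 * X^4 = (2::real)^(29 + 8*k*L)" by (simp add: power_add)
      also have "\<dots> = 2 powr (real (29 + 8*k*L))" by (rule powr_realpow[symmetric]) simp
      also have "real (29 + 8*k*L) = 29 + 8 * real k * real L" by simp
      finally have "2^29 * X^4 = 2 powr (29 + 8 * real k * real L)" .
      also have "\<dots> \<le> 2 powr (c * real k * lg)"
      proof (intro powr_mono)
        have "real k * real L \<le> real k * (2 * lg)" using L1 by (intro mult_left_mono) auto
        hence "8 * real k * real L \<le> 16 * real k * lg" by (simp add: algebra_simps)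
        moreover have "29 \<le> 29 * real k * lg"
        proof -
          have "1 * 1 \<le> real k * lg" using lg1 k0 by (intro mult_mono) auto
          thus ?thesis by simp
        qed
        ultimately have "29 + 8 * real k * real L \<le> 45 * real k * lg" by linarith
        thus "29 + 8 * real k * real L \<le> c * real k * lg" by (simp add: c_def)
      qed simp
      finally show ?thesis using y1[of "m-1"] by (intro mult_right_mono) auto
    qed
    moreover have "nat (int m - 1) = m - 1" by simp
    ultimately show ?thesis unfolding mm ilog_def y_def lg_def by simp
  qed
qed


end
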